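(* Let $f\in\mathbb{Z}[t]$ be irreducible, and let $\alpha$ be a root of $f$ lying in its splitting field. Suppose that $f(t)=g(h(t))-t$ with $g,h\in\mathbb{Z}[t]$ both of degree exceeding $1$. Then $f(g(t))$ is divisible by the minimal polynomial of $h(\alpha)$ over $\mathbb{Q}$, and hence $f$ admits polysmoothness $1-1/\deg(g)$.
   Context: A polynomial $f\in\mathbb{Z}[t]$ of positive degree admits polysmoothness $\theta$ (for a real $\theta\ge 0$) if there exists a non-constant polynomial $g\in\mathbb{Z}[t]$ such that every irreducible factor of $f(g(t))$ has degree at most $\theta\,(\deg f)(\deg g)$. *)

theory Defs
  imports Complex_Main "HOL-Computational_Algebra.Polynomial" "HOL-Computational_Algebra.Polynomial_Factorial"
begin

definition is_min_poly_rat :: "complex \<Rightarrow> rat poly \<Rightarrow> bool" where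
  "is_min_poly_rat x p \<longleftrightarrow>
     lead_coeff p = 1 \<and> poly (map_poly of_rat p) x = 0 \<and>
     (\<forall>q. q \<noteq> 0 \<and> poly (map_poly of_rat q) x = 0 \<longrightarrow> degree p \<le> degree q)"

definition min_poly_rat :: "complex \<Rightarrow> rat poly" where
  "min_poly_rat x = (THE p. is_min_poly_rat x p)"

definition admits_polysmoothness :: "int poly \<Rightarrow> real \<Rightarrow> bool" where
  "admits_polysmoothness f \<theta> \<longleftrightarrow>
     degree f > 0 \<and> \<theta> \<ge> 0 \<and>
     (\<exists>g :: int poly. degree g > 0 \<and>
        (\<forall>p :: int poly. irreducible p \<and> p dvd pcompose f g \<longrightarrow>
            real (degree p) \<le> \<theta> * real (degree f) * real (degree g)))"

end

theory Submission
  imports Defs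
begin

lemma mpi_mult: "map_poly (of_int :: int \<Rightarrow> 'a::comm_ring_1) (p*q) = map_poly of_int p * map_poly of_int q"
  by (intro poly_eqI) (simp add: coeff_map_poly coeff_mult of_int_sum)
lemma mpi_diff: "map_poly (of_int :: int \<Rightarrow> 'a::comm_ring_1) (p-q) = map_poly of_int p - map_poly of_int q"
  by (intro poly_eqI) (simp add: coeff_map_poly)
lemma mpi_add: "map_poly (of_int :: int \<Rightarrow> 'a::comm_ring_1) (p+q) = map_poly of_int p + map_poly of_int q"
  by (intro poly_eqI) (simp add: coeff_map_poly)
lemma mpr_mult: "map_poly (of_rat :: rat \<Rightarrow> 'a::field_char_0) (p*q) = map_poly of_rat p * map_poly of_rat q"
  by (intro poly_eqI) (simp add: coeff_map_poly coeff_mult of_rat_sum of_rat_mult)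
lemma mpr_diff: "map_poly (of_rat :: rat \<Rightarrow> 'a::field_char_0) (p-q) = map_poly of_rat p - map_poly of_rat q"
  by (intro poly_eqI) (simp add: coeff_map_poly of_rat_diff)

lemma mpi_pcompose: "poly (map_poly (of_int :: int \<Rightarrow> 'a::comm_ring_1) (pcompose p q)) x
   = poly (map_poly of_int p) (poly (map_poly of_int q) x)"
proof (induction p)
  case 0
  then show ?case by simp
next
  case (pCons a p)
  show ?case
    by (simp add: pcompose_pCons mpi_add mpi_mult map_poly_pCons pCons.IH)
qed

lemma mpri: "map_poly (of_rat :: rat \<Rightarrow> 'a::field_char_0) (map_poly of_int p) = map_poly of_int p"
  by (simp add: map_poly_map_poly o_def)

lemma dvd_pcompose_diff:
  fixes a b :: "'a::comm_ring_1 poly"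
  shows "(a - b) dvd (pcompose g a - pcompose g b)"
proof (induction g)
  case 0
  then show ?case by simp
next
  case (pCons c p)
  have "pcompose (pCons c p) a - pcompose (pCons c p) b
      = a * (pcompose p a - pcompose p b) + (a - b) * pcompose p b"
    by (simp add: pcompose_pCons algebra_simps)
  then show ?case using pCons.IH by simp
qed

lemma min_poly_exists:
  fixes q :: "rat poly"
  assumes "q \<noteq> 0" "poly (map_poly of_rat q) x = 0"
  shows "is_min_poly_rat x (min_poly_rat x)"
proof -
  define S where "S = {p::rat poly. p \<noteq> 0 \<and> poly (map_poly of_rat p) x = 0}"
  have ex: "\<exists>k p. p \<in> S \<and> degree p = k" using assms S_def by blast
  define m where "m = (LEAST k. \<exists>p. p \<in> S \<and> degree p = k)"
  obtain p0 where p0: "p0 \<in> S" "degree p0 = m"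
    using LeastI_ex[OF ex] m_def by blast
  have minim: "degree p0 \<le> degree r" if "r \<in> S" for r
    using p0 that m_def Least_le[of "\<lambda>k. \<exists>p. p \<in> S \<and> degree p = k" "degree r"] by auto
  define M where "M = smult (inverse (lead_coeff p0)) p0"
  have p0nz: "p0 \<noteq> 0" using p0 S_def by auto
  have lc: "lead_coeff M = 1" using p0nz by (simp add: M_def)
  have "map_poly (of_rat :: rat \<Rightarrow> complex) M = smult (of_rat (inverse (lead_coeff p0))) (map_poly of_rat p0)"
    unfolding M_def by (rule map_poly_smult) (simp_all add: of_rat_mult)
  hence ev: "poly (map_poly of_rat M) x = 0" using p0 S_def by simp
  have dM: "degree M = degree p0" using p0nz by (simp add: M_def)
  have isM: "is_min_poly_rat x M"
    unfolding is_min_poly_rat_def using lc ev dM minim S_def by auto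
  have uniq: "P = M" if P: "is_min_poly_rat x P" for P
  proof (rule ccontr)
    assume ne: "P \<noteq> M"
    have Pnz: "P \<noteq> 0" using P unfolding is_min_poly_rat_def by auto
    have Mnz: "M \<noteq> 0" using lc by auto
    have "degree P \<le> degree M" using P Mnz ev unfolding is_min_poly_rat_def by blast
    moreover have "degree M \<le> degree P" using isM Pnz P unfolding is_min_poly_rat_def by blast
    ultimately have deq: "degree P = degree M" by simp
    have lP: "lead_coeff P = 1" using P unfolding is_min_poly_rat_def by blast
    have D: "P - M \<noteq> 0" using ne by simp
    have evD: "poly (map_poly of_rat (P - M)) x = 0"
      using P ev unfolding is_min_poly_rat_def by (simp add: mpr_diff)
    have "degree (P - M) < degree M"
    proof -
      have "degree M > 0"
      proof (rule ccontr)
        assume "\<not> degree M > 0"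
        hence "degree M = 0" by simp
        then obtain a where "M = [:a:]" by (metis degree_eq_zeroE)
        hence "M = [:1:]" using lc by simp
        with ev show False by (simp add: map_poly_pCons)
      qed
      moreover have "coeff (P - M) (degree M) = 0" using lP lc deq by simp
      ultimately show ?thesis using D deq
        by (metis degree_diff_le le_eq_less_or_eq leading_coeff_0_iff order.refl)
    qed
    moreover have "degree M \<le> degree (P - M)" using isM D evD unfolding is_min_poly_rat_def by blast
    ultimately show False by simp
  qed
  have "min_poly_rat x = M"
    unfolding min_poly_rat_def using isM uniq by (rule the_equality)
  thus ?thesis using isM by simp
qed

lemma min_poly_dvd:
  fixes q :: "rat poly"
  assumes "q \<noteq> 0" "poly (map_poly of_rat q) x = 0"
  shows "min_poly_rat x dvd q"
proof -
  define M where "M = min_poly_rat x"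
  have isM: "is_min_poly_rat x M" using min_poly_exists[OF assms] M_def by simp
  have Mnz: "M \<noteq> 0" using isM unfolding is_min_poly_rat_def by auto
  define r where "r = q mod M"
  have "q = M * (q div M) + r" by (simp add: r_def)
  hence "r = q - M * (q div M)" by (simp add: algebra_simps)
  hence evr: "poly (map_poly of_rat r) x = 0"
    using assms isM unfolding is_min_poly_rat_def by (simp add: mpr_diff mpr_mult)
  have "r = 0"
  proof (rule ccontr)
    assume rnz: "r \<noteq> 0"
    have "degree r < degree M" using rnz Mnz r_def degree_mod_less by blast
    moreover have "degree M \<le> degree r" using isM rnz evr unfolding is_min_poly_rat_def by blast
    ultimately show False by simp
  qed
  thus ?thesis using M_def r_def by (simp add: dvd_eq_mod_eq_0)
qed

theorem corollary1p4:
  fixes f g h :: "int poly" and \<alpha> :: complex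
  assumes "irreducible f"
    and "poly (map_poly of_int f) \<alpha> = 0"
    and "f = pcompose g h - [:0, 1:]"
    and "degree g > 1" and "degree h > 1"
  shows "min_poly_rat (poly (map_poly of_int h) \<alpha>)
           dvd map_poly of_int (pcompose f g)
       \<and> admits_polysmoothness f (1 - 1 / real (degree g))"
proof
  define \<beta> where "\<beta> = poly (map_poly (of_int :: int \<Rightarrow> complex) h) \<alpha>"
  have mX: "map_poly (of_int :: int \<Rightarrow> complex) [:0,1:] = [:0,1:]"
    by (simp add: map_poly_pCons)
  have "poly (map_poly (of_int :: int \<Rightarrow> complex) g) \<beta> - \<alpha> = 0"
    using assms(2,3) by (simp add: mpi_diff mpi_pcompose mX \<beta>_def)
  hence gb: "poly (map_poly (of_int :: int \<Rightarrow> complex) g) \<beta> = \<alpha>" by simp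
  have degf: "degree f = degree g * degree h"
  proof -
    have "degree (pcompose g h) = degree g * degree h" by (rule degree_pcompose)
    moreover have "degree g * degree h > 1" using assms(4,5)
      by (metis less_1_mult)
    ultimately have "degree (pcompose g h - [:0,1:]) = degree (pcompose g h)"
      apply (subst diff_conv_add_uminus) apply (rule degree_add_eq_left) by simp
    thus ?thesis using assms(3) by (simp add: degree_pcompose)
  qed
  have fgnz: "pcompose f g \<noteq> 0"
  proof
    assume "pcompose f g = 0"
    hence "degree (pcompose f g) = 0" by simp
    thus False using degf assms(4,5) by (simp add: degree_pcompose)
  qed
  show "min_poly_rat (poly (map_poly of_int h) \<alpha>) dvd map_poly of_int (pcompose f g)"
  proof -
    have nz: "map_poly (of_int :: int \<Rightarrow> rat) (pcompose f g) \<noteq> 0"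
      using fgnz by (simp add: map_poly_eq_0_iff)
    have "poly (map_poly (of_rat :: rat \<Rightarrow> complex) (map_poly of_int (pcompose f g))) \<beta> = 0"
      using assms(2) by (simp add: mpri mpi_pcompose gb)
    from min_poly_dvd[OF nz this] show ?thesis by (simp add: \<beta>_def)
  qed
  show "admits_polysmoothness f (1 - 1 / real (degree g))"
  proof -
    define n where "n = degree f"
    define d where "d = degree g"
    have d2: "d \<ge> 2" using assms(4) d_def by simp
    have npos: "n > 0" using degf assms(4,5) n_def by simp
    define F where "F = pcompose h g - [:0,1:]"
    have degF: "degree F = n"
    proof -
      have "degree (pcompose h g) = degree h * degree g" by (rule degree_pcompose)
      moreover have "degree h * degree g > 1" using assms(4,5) by (metis less_1_mult)
      ultimately have "degree (pcompose h g - [:0,1:]) = degree (pcompose h g)"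
        apply (subst diff_conv_add_uminus) apply (rule degree_add_eq_left) by simp
      thus ?thesis using degf n_def F_def by (simp add: mult.commute degree_pcompose)
    qed
    have "pcompose f g = pcompose g (pcompose h g) - pcompose g [:0,1:]"
      using assms(3) by (simp add: pcompose_diff pcompose_assoc pcompose_pCons)
    hence "F dvd pcompose f g" unfolding F_def by (metis dvd_pcompose_diff)
    then obtain Q where Q: "pcompose f g = F * Q" by (elim dvdE)
    have Fnz: "F \<noteq> 0" and Qnz: "Q \<noteq> 0" using Q fgnz by auto
    have "degree (pcompose f g) = n * d" by (simp add: degree_pcompose n_def d_def)
    hence degQ: "degree Q = n * d - n" using Q Fnz Qnz degF by (simp add: degree_mult_eq)
    have nle: "n \<le> n * d - n"
    proof -
      have "n * 2 \<le> n * d" using d2 by (rule mult_le_mono2)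
      moreover have "n * 2 = n + n" by simp
      ultimately show ?thesis by linarith
    qed
    have bound: "degree p \<le> n * d - n" if "irreducible p" "p dvd pcompose f g" for p :: "int poly"
    proof -
      have "prime_elem p" using that(1) by (simp add: prime_elem_iff_irreducible)
      hence "p dvd F \<or> p dvd Q" using that(2) Q by (simp add: prime_elem_dvd_mult_iff)
      thus ?thesis
      proof
        assume "p dvd F"
        hence "degree p \<le> n" using dvd_imp_degree_le[OF _ Fnz] degF by simp
        thus ?thesis using nle by simp
      next
        assume "p dvd Q"
        thus ?thesis using dvd_imp_degree_le[OF _ Qnz] degQ by simp
      qed
    qed
    have eq: "(1 - 1 / real d) * real n * real d = real (n * d - n)"
    proof -
      have "n \<le> n * d" using nle by linarith
      hence "real (n * d - n) = real (n * d) - real n" by (rule of_nat_diff)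
      hence "real (n * d - n) = real n * real d - real n" by simp
      moreover have "(1 - 1 / real d) * real n * real d = real n * real d - real n"
        using d2 by (simp add: field_simps)
      ultimately show ?thesis by simp
    qed
    have th: "1 - 1 / real d \<ge> 0" using d2 by simp
    show ?thesis unfolding admits_polysmoothness_def
      using npos th eq bound assms(4) n_def d_def by (metis of_nat_le_iff less_trans zero_less_one)
  qed
qed

end
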